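(* Let $s,k$ be integers with $4 \le s \le k$. There exists a $T_s$-free directed graph $D$ without loops on $N = 2^{2s-3} - 2^{s-1} - 2^{s-2} + 1$ vertices such that \[ \mathrm{fwi}_k(D) \le \sum_{t=1}^{s-1} \binom{k}{t} 2^{(s-1)(t+k) - \binom{t+1}{2}}. \] In particular, if $k = s + a$ where $a \ge 0$ and $a = o(s)$ (as $s \to \infty$), then \[ \mathrm{fwi}_k(D) \le 2^{\frac{3}{2}s^2 + as - \frac{5}{2}s + o(s)}. \]
   Context: $T_s$ is the transitive tournament on $s$ vertices; a digraph is $T_s$-free if it contains no copy of $T_s$. For a digraph $D$, a $k$-tuple $(v_1,\dots,v_k)\in V(D)^k$ is forward independent if there are no $i<j$ in $[k]$ with $(v_i,v_j)$ an arc of $D$; $\mathrm{fwi}_k(D)$ denotes the number of forward independent $k$-tuples in $D$. *)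

theory Defs
  imports Complex_Main "HOL-Library.Landau_Symbols"
begin

text \<open>A directed graph without loops on vertex set V with arc relation E.
  Pairs of opposite arcs are allowed.\<close>
definition loopless_digraph :: "'a set \<Rightarrow> ('a \<times> 'a) set \<Rightarrow> bool" where
  "loopless_digraph V E \<longleftrightarrow> finite V \<and> E \<subseteq> V \<times> V \<and> (\<forall>v. (v, v) \<notin> E)"

definition contains_Ts :: "'a set \<Rightarrow> ('a \<times> 'a) set \<Rightarrow> nat \<Rightarrow> bool" where
  "contains_Ts V E s \<longleftrightarrow>
     (\<exists>f. inj_on f {0..<s} \<and> f ` {0..<s} \<subseteq> V \<and>
          (\<forall>i j. i < j \<and> j < s \<longrightarrow> (f i, f j) \<in> E))"

definition Ts_free :: "'a set \<Rightarrow> ('a \<times> 'a) set \<Rightarrow> nat \<Rightarrow> bool" where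
  "Ts_free V E s \<longleftrightarrow> \<not> contains_Ts V E s"

definition fwi :: "'a set \<Rightarrow> ('a \<times> 'a) set \<Rightarrow> nat \<Rightarrow> nat" where
  "fwi V E k = card {xs. length xs = k \<and> set xs \<subseteq> V \<and>
                         (\<forall>i j. i < j \<and> j < k \<longrightarrow> (xs ! i, xs ! j) \<notin> E)}"

end

theory Submission
  imports Defs "HOL-Real_Asymp.Real_Asymp"
begin


definition xr :: "nat set \<Rightarrow> nat set \<Rightarrow> nat set" where
  "xr a b = (a - b) \<union> (b - a)"

definition ip :: "nat set \<Rightarrow> nat set \<Rightarrow> bool" where
  "ip a b \<longleftrightarrow> odd (card (a \<inter> b))"

lemma xr_comm: "xr a b = xr b a" unfolding xr_def by blast
lemma xr_assoc: "xr (xr a b) c = xr a (xr b c)" unfolding xr_def by blast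
lemma xr_self: "xr a a = {}" unfolding xr_def by blast
lemma xr_empty[simp]: "xr a {} = a" "xr {} a = a" unfolding xr_def by auto
lemma xr_cancel: "xr a (xr a b) = b" unfolding xr_def by blast
lemma xr_sub: "a \<subseteq> S \<Longrightarrow> b \<subseteq> S \<Longrightarrow> xr a b \<subseteq> S" unfolding xr_def by blast

lemma ip_comm: "ip a b = ip b a" unfolding ip_def by (simp add: Int_commute)

lemma card_xr_int:
  assumes "finite c"
  shows "card (xr a b \<inter> c) + 2 * card (a \<inter> b \<inter> c) = card (a \<inter> c) + card (b \<inter> c)"
proof -
  have f: "finite (a \<inter> c)" "finite (b \<inter> c)" using assms by auto
  have e1: "xr a b \<inter> c = ((a \<inter> c) - (b \<inter> c)) \<union> ((b \<inter> c) - (a \<inter> c))" unfolding xr_def by blast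
  have d: "((a \<inter> c) - (b \<inter> c)) \<inter> ((b \<inter> c) - (a \<inter> c)) = {}" by blast
  have "card (xr a b \<inter> c) = card ((a \<inter> c) - (b \<inter> c)) + card ((b \<inter> c) - (a \<inter> c))"
    unfolding e1 using f d by (simp add: card_Un_disjoint)
  moreover have "card (a \<inter> c) = card ((a \<inter> c) \<inter> (b \<inter> c)) + card ((a \<inter> c) - (b \<inter> c))"
    using f(1) by (rule card_Int_Diff)
  moreover have "card (b \<inter> c) = card ((b \<inter> c) \<inter> (a \<inter> c)) + card ((b \<inter> c) - (a \<inter> c))"
    using f(2) by (rule card_Int_Diff)
  moreover have "(a \<inter> c) \<inter> (b \<inter> c) = a \<inter> b \<inter> c" "(b \<inter> c) \<inter> (a \<inter> c) = a \<inter> b \<inter> c" by blast+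
  ultimately show ?thesis by simp
qed

lemma ip_xr: "finite c \<Longrightarrow> ip (xr a b) c = (ip a c \<noteq> ip b c)"
proof -
  assume "finite c"
  then have h: "card (xr a b \<inter> c) + 2 * card (a \<inter> b \<inter> c) = card (a \<inter> c) + card (b \<inter> c)" by (rule card_xr_int)
  have "odd (card (xr a b \<inter> c)) = odd (card (xr a b \<inter> c) + 2 * card (a \<inter> b \<inter> c))" by simp
  also have "\<dots> = odd (card (a \<inter> c) + card (b \<inter> c))" using h by simp
  finally show ?thesis unfolding ip_def by simp
qed

lemma ip_xr2: "finite c \<Longrightarrow> ip c (xr a b) = (ip c a \<noteq> ip c b)"
  using ip_xr ip_comm by metis

fun fspan :: "nat set list \<Rightarrow> nat set set" where
  "fspan [] = {{}}"
| "fspan (x # xs) = fspan xs \<union> (xr x) ` fspan xs"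

lemma fspan_finite: "finite (fspan xs)"
  by (induction xs) auto

lemma fspan_empty: "{} \<in> fspan xs"
  by (induction xs) auto

lemma fspan_mem: "x \<in> set xs \<Longrightarrow> x \<in> fspan xs"
proof (induction xs)
  case Nil then show ?case by simp
next
  case (Cons a xs)
  show ?case
  proof (cases "x = a")
    case True
    have "xr a {} \<in> (xr a) ` fspan xs" using fspan_empty by blast
    then show ?thesis using True by simp
  next
    case False then show ?thesis using Cons by auto
  qed
qed

lemma fspan_sub: "set xs \<subseteq> Pow S \<Longrightarrow> fspan xs \<subseteq> Pow S"
  by (induction xs) (auto simp: xr_def)

lemma fspan_closed: "u \<in> fspan xs \<Longrightarrow> v \<in> fspan xs \<Longrightarrow> xr u v \<in> fspan xs"
proof (induction xs arbitrary: u v)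
  case Nil then show ?case by (simp add: xr_self)
next
  case (Cons x xs)
  from Cons.prems consider
      "u \<in> fspan xs" "v \<in> fspan xs"
    | v' where "u \<in> fspan xs" "v' \<in> fspan xs" "v = xr x v'"
    | u' where "u' \<in> fspan xs" "v \<in> fspan xs" "u = xr x u'"
    | u' v' where "u' \<in> fspan xs" "v' \<in> fspan xs" "u = xr x u'" "v = xr x v'"
    by auto
  then show ?case
  proof cases
    case 1 then show ?thesis using Cons.IH by simp
  next
    case (2 v')
    have "xr u v = xr x (xr u v')" using 2 by (metis xr_assoc xr_comm)
    then show ?thesis using Cons.IH 2 by auto
  next
    case (3 u')
    have "xr u v = xr x (xr u' v)" using 3 by (metis xr_assoc)
    then show ?thesis using Cons.IH 3 by auto
  next
    case (4 u' v')
    have "xr u v = xr u' v'" using 4 by (metis xr_assoc xr_comm xr_cancel)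
    then show ?thesis using Cons.IH 4 by auto
  qed
qed

lemma fspan_in: "x \<in> fspan xs \<Longrightarrow> fspan (x # xs) = fspan xs"
  using fspan_closed by auto

lemma fspan_notin:
  assumes "x \<notin> fspan xs"
  shows "card (fspan (x # xs)) = 2 * card (fspan xs)"
proof -
  have d: "fspan xs \<inter> (xr x) ` fspan xs = {}"
  proof (rule ccontr)
    assume "fspan xs \<inter> (xr x) ` fspan xs \<noteq> {}"
    then obtain u v where uv: "u \<in> fspan xs" "v \<in> fspan xs" "v = xr x u" by auto
    then have "x = xr v u" by (metis xr_assoc xr_comm xr_cancel)
    then have "x \<in> fspan xs" using fspan_closed[OF uv(2) uv(1)] by simp
    then show False using assms by simp
  qed
  have i: "inj_on (xr x) (fspan xs)" by (metis inj_onI xr_cancel)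
  have "card (fspan (x # xs)) = card (fspan xs) + card ((xr x) ` fspan xs)"
    using d fspan_finite by (simp add: card_Un_disjoint)
  also have "\<dots> = 2 * card (fspan xs)" using card_image[OF i] by simp
  finally show ?thesis .
qed

lemma fspan_pow2: "\<exists>t. card (fspan xs) = 2 ^ t"
proof (induction xs)
  case Nil then show ?case by (intro exI[of _ 0]) simp
next
  case (Cons x xs)
  then obtain t where t: "card (fspan xs) = 2 ^ t" by auto
  show ?case
  proof (cases "x \<in> fspan xs")
    case True then show ?thesis using t fspan_in by auto
  next
    case False then show ?thesis using t fspan_notin[OF False] by (metis power_Suc)
  qed
qed

lemma fspan_perp:
  assumes "\<forall>\<psi>\<in>set L. \<not> ip \<psi> y" "finite y" "\<psi> \<in> fspan L"
  shows "\<not> ip \<psi> y"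
  using assms
proof (induction L arbitrary: \<psi>)
  case Nil then show ?case by (simp add: ip_def)
next
  case (Cons a L)
  then show ?case by (auto simp: ip_xr)
qed

definition perp :: "nat \<Rightarrow> nat set set \<Rightarrow> nat set set" where
  "perp d V = {\<psi>. \<psi> \<subseteq> {0..<d} \<and> (\<forall>v\<in>V. \<not> ip \<psi> v)}"

lemma perp_finite: "finite (perp d V)"
proof -
  have "perp d V \<subseteq> Pow {0..<d}" unfolding perp_def by auto
  then show ?thesis by (rule finite_subset) auto
qed

lemma sub_shrink: "x \<subseteq> {0..<Suc d} \<Longrightarrow> d \<notin> x \<Longrightarrow> x \<subseteq> {0..<d}"
  by (auto simp: subset_iff less_Suc_eq)

lemma subspace_bound:
  "V \<subseteq> Pow {0..<d} \<Longrightarrow> V \<noteq> {} \<Longrightarrow> (\<forall>u\<in>V. \<forall>v\<in>V. xr u v \<in> V)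
   \<Longrightarrow> card V * card (perp d V) \<le> 2 ^ d"
proof (induction d arbitrary: V)
  case 0
  then have "V \<subseteq> {{}}" by auto
  then have "card V \<le> card {{}::nat set}" by (intro card_mono) auto
  then have "card V \<le> 1" by simp
  moreover have "perp 0 V \<subseteq> {{}}" unfolding perp_def by auto
  then have "card (perp 0 V) \<le> card {{}::nat set}" by (intro card_mono) auto
  then have "card (perp 0 V) \<le> 1" by simp
  ultimately show ?case by (metis mult_le_mono power_0 mult_1)
next
  case (Suc d)
  define V0 where "V0 = {v\<in>V. d \<notin> v}"
  have emp: "{} \<in> V" using Suc.prems by (metis all_not_in_conv xr_self)
  have V0sub: "V0 \<subseteq> Pow {0..<d}" using Suc.prems(1) sub_shrink unfolding V0_def by blast
  have V0ne: "V0 \<noteq> {}" using emp unfolding V0_def by auto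
  have V0cl: "\<forall>u\<in>V0. \<forall>v\<in>V0. xr u v \<in> V0" using Suc.prems(3) unfolding V0_def xr_def by auto
  define P where "P = perp d V0"
  have IH: "card V0 * card P \<le> 2 ^ d" unfolding P_def using Suc.IH[OF V0sub V0ne V0cl] .
  have finV: "finite V" using Suc.prems(1) by (rule finite_subset) auto
  have finV0: "finite V0" using finV unfolding V0_def by auto
  have finP: "finite P" unfolding P_def by (rule perp_finite)
  have restr: "\<psi> - {d} \<in> P" if "\<psi> \<in> perp (Suc d) V" for \<psi>
  proof -
    have "\<psi> \<subseteq> {0..<Suc d}" using that unfolding perp_def by auto
    then have "\<psi> - {d} \<subseteq> {0..<d}" using sub_shrink[of "\<psi> - {d}" d] by blast
    moreover have "\<not> ip (\<psi> - {d}) v" if "v \<in> V0" for v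
    proof -
      have "(\<psi> - {d}) \<inter> v = \<psi> \<inter> v" using that unfolding V0_def by auto
      then show ?thesis using \<open>\<psi> \<in> perp (Suc d) V\<close> that unfolding perp_def V0_def ip_def by auto
    qed
    ultimately show ?thesis unfolding P_def perp_def by auto
  qed
  show ?case
  proof (cases "\<exists>w\<in>V. d \<in> w")
    case False
    then have "V0 = V" unfolding V0_def by auto
    have "perp (Suc d) V \<subseteq> P \<union> (insert d) ` P"
    proof
      fix \<psi> assume h: "\<psi> \<in> perp (Suc d) V"
      show "\<psi> \<in> P \<union> (insert d) ` P"
      proof (cases "d \<in> \<psi>")
        case True
        then have "\<psi> = insert d (\<psi> - {d})" by auto
        then show ?thesis using restr[OF h] by blast
      next
        case False
        then have "\<psi> = \<psi> - {d}" by auto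
        then show ?thesis using restr[OF h] by auto
      qed
    qed
    then have "card (perp (Suc d) V) \<le> card (P \<union> (insert d) ` P)"
      using finP by (intro card_mono) auto
    also have "\<dots> \<le> card P + card ((insert d) ` P)" by (rule card_Un_le)
    also have "\<dots> \<le> card P + card P" using card_image_le[OF finP, of "insert d"] by simp
    finally have "card (perp (Suc d) V) \<le> 2 * card P" by simp
    then have "card V * card (perp (Suc d) V) \<le> card V0 * (2 * card P)"
      using \<open>V0 = V\<close> by simp
    then show ?thesis using IH by simp
  next
    case True
    then obtain w where w: "w \<in> V" "d \<in> w" by auto
    have "V \<subseteq> V0 \<union> (xr w) ` V0"
    proof
      fix v assume v: "v \<in> V"
      show "v \<in> V0 \<union> (xr w) ` V0"
      proof (cases "d \<in> v")
        case True
        have "xr w v \<in> V0" using Suc.prems(3) v w True unfolding V0_def xr_def by auto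
        moreover have "v = xr w (xr w v)" by (simp add: xr_cancel)
        ultimately show ?thesis by blast
      next
        case False then show ?thesis using v unfolding V0_def by auto
      qed
    qed
    then have "card V \<le> card (V0 \<union> (xr w) ` V0)" using finV0 by (intro card_mono) auto
    also have "\<dots> \<le> card V0 + card ((xr w) ` V0)" by (rule card_Un_le)
    also have "\<dots> \<le> card V0 + card V0" using card_image_le[OF finV0, of "xr w"] by simp
    finally have cV: "card V \<le> 2 * card V0" by simp
    have inj: "inj_on (\<lambda>\<psi>. \<psi> - {d}) (perp (Suc d) V)"
    proof (rule inj_onI)
      fix \<psi> \<psi>' assume h: "\<psi> \<in> perp (Suc d) V" "\<psi>' \<in> perp (Suc d) V" "\<psi> - {d} = \<psi>' - {d}"
      show "\<psi> = \<psi>'"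
      proof (rule ccontr)
        assume ne: "\<psi> \<noteq> \<psi>'"
        have "xr \<psi> \<psi>' = {d}" using h(3) ne unfolding xr_def by blast
        moreover have fw: "finite w" using w Suc.prems(1) by (meson PowD finite_atLeastLessThan finite_subset subsetD)
        have "\<not> ip \<psi> w" "\<not> ip \<psi>' w" using h w unfolding perp_def by auto
        then have "\<not> ip (xr \<psi> \<psi>') w" using ip_xr[OF fw] by simp
        moreover have "ip {d} w" using w unfolding ip_def by simp
        ultimately show False by simp
      qed
    qed
    have "(\<lambda>\<psi>. \<psi> - {d}) ` perp (Suc d) V \<subseteq> P" using restr by auto
    then have "card (perp (Suc d) V) \<le> card P"
      using card_inj_on_le[OF inj _ finP] by simp
    then have "card V * card (perp (Suc d) V) \<le> (2 * card V0) * card P"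
      using cV by (intro mult_le_mono) auto
    then show ?thesis using IH by simp
  qed
qed



definition VP :: "nat \<Rightarrow> (nat set \<times> nat set) set" where
  "VP d = {(x, \<phi>). x \<subseteq> {0..<d} \<and> \<phi> \<subseteq> {0..<d} \<and> ip \<phi> x}"

definition XX :: "nat \<Rightarrow> nat set list \<Rightarrow> nat set set" where
  "XX d L = {x. x \<subseteq> {0..<d} \<and> (\<forall>\<psi>\<in>set L. ip \<psi> x)}"

lemma VP_finite: "finite (VP d)"
proof -
  have "VP d \<subseteq> Pow {0..<d} \<times> Pow {0..<d}" unfolding VP_def by auto
  then show ?thesis by (rule finite_subset) auto
qed

lemma XX_finite: "finite (XX d L)"
proof -
  have "XX d L \<subseteq> Pow {0..<d}" unfolding XX_def by auto
  then show ?thesis by (rule finite_subset) auto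
qed

lemma key_bound:
  assumes "set L \<subseteq> Pow {0..<d}"
  shows "card (fspan L) * card (XX d L) \<le> 2 ^ d"
proof (cases "XX d L = {}")
  case True then show ?thesis by simp
next
  case False
  then obtain x0 where x0: "x0 \<in> XX d L" by auto
  have inj: "inj_on (\<lambda>x. xr x x0) (XX d L)" by (rule inj_onI) (metis xr_cancel xr_comm)
  have img: "(\<lambda>x. xr x x0) ` XX d L \<subseteq> perp d (fspan L)"
  proof
    fix y assume "y \<in> (\<lambda>x. xr x x0) ` XX d L"
    then obtain x where x: "x \<in> XX d L" "y = xr x x0" by auto
    have "x \<subseteq> {0..<d}" "x0 \<subseteq> {0..<d}" using x x0 unfolding XX_def by auto
    then have ysub: "y \<subseteq> {0..<d}" using xr_sub x(2) by blast
    then have fy: "finite y" by (rule finite_subset) auto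
    have "\<forall>\<psi>\<in>set L. \<not> ip \<psi> y"
    proof
      fix \<psi> assume p: "\<psi> \<in> set L"
      then have "finite \<psi>" using assms by (meson PowD finite_atLeastLessThan finite_subset subsetD)
      then show "\<not> ip \<psi> y" using x x0 p unfolding XX_def by (simp add: ip_xr2)
    qed
    then have "\<forall>\<psi>\<in>fspan L. \<not> ip \<psi> y" using fspan_perp fy by blast
    then have "\<forall>v\<in>fspan L. \<not> ip y v" using ip_comm by metis
    then show "y \<in> perp d (fspan L)" unfolding perp_def using ysub by auto
  qed
  have "card (XX d L) \<le> card (perp d (fspan L))"
    using card_inj_on_le[OF inj img perp_finite] .
  then have "card (fspan L) * card (XX d L) \<le> card (fspan L) * card (perp d (fspan L))" by simp
  also have "\<dots> \<le> 2 ^ d"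
    using subspace_bound[of "fspan L" d] fspan_sub[OF assms] fspan_empty fspan_closed by blast
  finally show ?thesis .
qed

lemma pow_div_le: "2 ^ t * c \<le> (2::nat) ^ d \<Longrightarrow> c \<le> 2 ^ (d - t)"
proof (cases "t \<le> d")
  case True
  assume h: "2 ^ t * c \<le> (2::nat) ^ d"
  have "(2::nat) ^ d = 2 ^ t * 2 ^ (d - t)" using True by (simp add: power_add[symmetric])
  then show ?thesis using h by simp
next
  case False
  assume h: "2 ^ t * c \<le> (2::nat) ^ d"
  have "(2::nat) ^ d < 2 ^ t" using False by simp
  show ?thesis
  proof (rule ccontr)
    assume "\<not> c \<le> 2 ^ (d - t)"
    then have "c \<ge> 1" by simp
    then have "(2::nat) ^ t \<le> 2 ^ t * c" by simp
    then show False using h \<open>(2::nat) ^ d < 2 ^ t\<close> by linarith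
  qed
qed

fun fi :: "(nat set \<times> nat set) list \<Rightarrow> bool" where
  "fi [] = True"
| "fi (a # p) = (fi p \<and> (\<forall>b\<in>set (a # p). ip (snd b) (fst a)))"

definition W :: "nat \<Rightarrow> nat \<Rightarrow> (nat set \<times> nat set) list set" where
  "W d k = {ws. length ws = k \<and> set ws \<subseteq> VP d \<and> fi ws}"

definition G :: "nat \<Rightarrow> nat \<Rightarrow> nat \<Rightarrow> (nat set \<times> nat set) list set" where
  "G d k t = {ws \<in> W d k. card (fspan (map snd ws)) = 2 ^ t}"

lemma W_finite: "finite (W d k)"
proof -
  have "W d k \<subseteq> {ws. set ws \<subseteq> VP d \<and> length ws = k}" unfolding W_def by auto
  then show ?thesis by (rule finite_subset) (simp add: finite_lists_length_eq VP_finite)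
qed

lemma G_finite: "finite (G d k t)"
  using W_finite unfolding G_def by auto

lemma VP_snd_sub:
  assumes "set ws \<subseteq> VP d" shows "set (map snd ws) \<subseteq> Pow {0..<d}"
proof
  fix \<psi> assume "\<psi> \<in> set (map snd ws)"
  then obtain a where a: "a \<in> set ws" "\<psi> = snd a" by auto
  then have "a \<in> VP d" using assms by auto
  then show "\<psi> \<in> Pow {0..<d}" using a(2) unfolding VP_def by (cases a) auto
qed

lemma G_rec:
  "card (G d (Suc k) t) \<le> 2 ^ d * card (G d k t)
     + (if t = 0 then 0 else 2 ^ d * 2 ^ (d - t) * card (G d k (t - 1)))"
proof -
  define A1 where "A1 p = (\<lambda>(x, \<phi>). (x, \<phi>) # p) ` (XX d (map snd p) \<times> fspan (map snd p))" for p
  define A2 where "A2 p = (\<Union>\<phi>\<in>Pow {0..<d} - fspan (map snd p).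
                      (\<lambda>x. (x, \<phi>) # p) ` XX d (\<phi> # map snd p))" for p
  define S1 where "S1 = (\<Union>p\<in>G d k t. A1 p)"
  define S2 where "S2 = (if t = 0 then {} else \<Union>p\<in>G d k (t - 1). A2 p)"
  have sub: "G d (Suc k) t \<subseteq> S1 \<union> S2"
  proof
    fix ws assume ws: "ws \<in> G d (Suc k) t"
    then obtain a p where ap: "ws = a # p" unfolding G_def W_def by (cases ws) auto
    obtain x \<phi> where a: "a = (x, \<phi>)" by fastforce
    have pW: "p \<in> W d k" using ws ap unfolding G_def W_def by auto
    have aV: "a \<in> VP d" using ws ap unfolding G_def W_def by auto
    have fa: "\<forall>b\<in>set (a # p). ip (snd b) (fst a)" using ws ap unfolding G_def W_def by auto
    have xX: "x \<in> XX d (\<phi> # map snd p)" using fa aV a unfolding XX_def VP_def by auto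
    have cs: "card (fspan (\<phi> # map snd p)) = 2 ^ t" using ws ap a unfolding G_def by auto
    show "ws \<in> S1 \<union> S2"
    proof (cases "\<phi> \<in> fspan (map snd p)")
      case True
      then have "card (fspan (map snd p)) = 2 ^ t" using cs fspan_in by simp
      then have "p \<in> G d k t" using pW unfolding G_def by auto
      moreover have "x \<in> XX d (map snd p)" using xX unfolding XX_def by auto
      moreover have "ws \<in> A1 p" unfolding A1_def ap a
        by (rule image_eqI[where x="(x, \<phi>)"]) (use True \<open>x \<in> XX d (map snd p)\<close> in auto)
      ultimately show ?thesis unfolding S1_def by blast
    next
      case False
      then have c2: "2 * card (fspan (map snd p)) = 2 ^ t" using cs fspan_notin by simp
      have "t \<noteq> 0"
      proof
        assume "t = 0"
        then have "2 * card (fspan (map snd p)) = 1" using c2 by simp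
        then show False by presburger
      qed
      then obtain t' where t': "t = Suc t'" by (cases t) auto
      then have "card (fspan (map snd p)) = 2 ^ (t - 1)" using c2 by simp
      then have "p \<in> G d k (t - 1)" using pW unfolding G_def by auto
      moreover have "\<phi> \<in> Pow {0..<d}" using aV a unfolding VP_def by auto
      moreover have "ws \<in> A2 p" unfolding A2_def ap a
        using False \<open>\<phi> \<in> Pow {0..<d}\<close> xX by blast
      ultimately show ?thesis unfolding S2_def using \<open>t \<noteq> 0\<close> by auto
    qed
  qed
  have cA1: "card (A1 p) \<le> 2 ^ d" if "p \<in> G d k t" for p
  proof -
    have "card (A1 p) \<le> card (XX d (map snd p) \<times> fspan (map snd p))"
      unfolding A1_def by (rule card_image_le) (simp add: XX_finite fspan_finite)
    also have "\<dots> = card (fspan (map snd p)) * card (XX d (map snd p))" by (simp add: card_cartesian_product)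
    also have "\<dots> \<le> 2 ^ d"
    proof -
      have "set p \<subseteq> VP d" using that unfolding G_def W_def by auto
      then show ?thesis by (rule key_bound[OF VP_snd_sub])
    qed
    finally show ?thesis .
  qed
  have cA2: "card (A2 p) \<le> 2 ^ d * 2 ^ (d - t)" if "p \<in> G d k (t - 1)" "t \<noteq> 0" for p
  proof -
    have "set p \<subseteq> VP d" using that unfolding G_def W_def by auto
    then have Lsub: "set (map snd p) \<subseteq> Pow {0..<d}" by (rule VP_snd_sub)
    have cL: "card (fspan (map snd p)) = 2 ^ (t - 1)" using that unfolding G_def by auto
    have each: "card ((\<lambda>x. (x, \<phi>) # p) ` XX d (\<phi> # map snd p)) \<le> 2 ^ (d - t)"
      if "\<phi> \<in> Pow {0..<d} - fspan (map snd p)" for \<phi>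
    proof -
      obtain t' where t': "t = Suc t'" using \<open>t \<noteq> 0\<close> by (cases t) auto
      have "card (fspan (\<phi> # map snd p)) = 2 ^ t"
        using fspan_notin[of \<phi> "map snd p"] that cL t' by simp
      moreover have "card (fspan (\<phi> # map snd p)) * card (XX d (\<phi> # map snd p)) \<le> 2 ^ d"
        using Lsub that by (intro key_bound) auto
      ultimately have "card (XX d (\<phi> # map snd p)) \<le> 2 ^ (d - t)" using pow_div_le by metis
      then show ?thesis using card_image_le[OF XX_finite] le_trans by blast
    qed
    have "card (A2 p) \<le> (\<Sum>\<phi>\<in>Pow {0..<d} - fspan (map snd p). card ((\<lambda>x. (x, \<phi>) # p) ` XX d (\<phi> # map snd p)))"
      unfolding A2_def by (rule card_UN_le) auto
    also have "\<dots> \<le> (\<Sum>\<phi>\<in>Pow {0..<d} - fspan (map snd p). 2 ^ (d - t))"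
      by (rule sum_mono) (rule each)
    also have "\<dots> = card (Pow {0..<d} - fspan (map snd p)) * 2 ^ (d - t)" by simp
    also have "\<dots> \<le> card (Pow {0..<(d::nat)}) * 2 ^ (d - t)"
      by (intro mult_le_mono1 card_mono) auto
    also have "\<dots> = 2 ^ d * 2 ^ (d - t)" by (simp add: card_Pow)
    finally show ?thesis .
  qed
  have "card S1 \<le> (\<Sum>p\<in>G d k t. card (A1 p))" unfolding S1_def by (rule card_UN_le) (rule G_finite)
  also have "\<dots> \<le> (\<Sum>p\<in>G d k t. 2 ^ d)" by (rule sum_mono) (rule cA1)
  also have "\<dots> = 2 ^ d * card (G d k t)" by simp
  finally have c1: "card S1 \<le> 2 ^ d * card (G d k t)" .
  have c2: "card S2 \<le> (if t = 0 then 0 else 2 ^ d * 2 ^ (d - t) * card (G d k (t - 1)))"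
  proof (cases "t = 0")
    case True then show ?thesis unfolding S2_def by simp
  next
    case False
    have "card S2 \<le> (\<Sum>p\<in>G d k (t - 1). card (A2 p))" unfolding S2_def using False
      by simp (rule card_UN_le, rule G_finite)
    also have "\<dots> \<le> (\<Sum>p\<in>G d k (t - 1). 2 ^ d * 2 ^ (d - t))" by (rule sum_mono) (rule cA2[OF _ False])
    also have "\<dots> = 2 ^ d * 2 ^ (d - t) * card (G d k (t - 1))" by simp
    finally show ?thesis using False by simp
  qed
  have fA1: "finite (A1 p)" for p unfolding A1_def by (simp add: XX_finite fspan_finite)
  have fA2: "finite (A2 p)" for p unfolding A2_def by (intro finite_UN_I) (auto simp: XX_finite)
  have fS: "finite (S1 \<union> S2)" unfolding S1_def S2_def using G_finite fA1 fA2 by auto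
  have "card (G d (Suc k) t) \<le> card (S1 \<union> S2)" using sub fS by (rule card_mono[rotated])
  also have "\<dots> \<le> card S1 + card S2" by (rule card_Un_le)
  finally show ?thesis using c1 c2 by linarith
qed



definition hb :: "nat \<Rightarrow> nat \<Rightarrow> nat \<Rightarrow> nat" where
  "hb d k t = (k choose t) * 2 ^ (d * k + (\<Sum>i=1..t. d - i))"

lemma hb_rec:
  "hb d (Suc k) t = 2 ^ d * hb d k t + (if t = 0 then 0 else 2 ^ d * 2 ^ (d - t) * hb d k (t - 1))"
proof (cases t)
  case 0
  have "d * Suc k = d + d * k" by simp
  then have "(2::nat) ^ (d * Suc k) = 2 ^ d * 2 ^ (d * k)" by (simp only: power_add)
  then show ?thesis unfolding hb_def using 0 by simp
next
  case (Suc t')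
  define S where "S = (\<Sum>i=1..t'. d - i)"
  define X where "X = d * k + S"
  define Y where "Y = d - Suc t'"
  define P where "P = (2::nat) ^ X"
  define q where "q = (2::nat) ^ Y"
  have s: "(\<Sum>i=1..Suc t'. d - i) = S + Y" unfolding S_def Y_def by simp
  have e1: "d * Suc k + (S + Y) = d + (X + Y)" unfolding X_def by simp
  have e2: "d * k + (S + Y) = X + Y" unfolding X_def by simp
  have p1: "(2::nat) ^ (d * Suc k + (S + Y)) = 2 ^ d * (P * q)" unfolding e1 P_def q_def by (simp only: power_add)
  have p2: "(2::nat) ^ (d * k + (S + Y)) = P * q" unfolding e2 P_def q_def by (simp only: power_add)
  have p3: "(2::nat) ^ (d * k + S) = P" unfolding P_def X_def ..
  have h1: "hb d (Suc k) (Suc t') = ((k choose t') + (k choose Suc t')) * (2 ^ d * (P * q))"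
    unfolding hb_def s p1 by simp
  have h2: "hb d k (Suc t') = (k choose Suc t') * (P * q)"
    unfolding hb_def s p2 ..
  have h3: "hb d k t' = (k choose t') * P"
    unfolding hb_def S_def[symmetric] p3 ..
  have "q = 2 ^ (d - t)" unfolding q_def Y_def Suc ..
  then show ?thesis unfolding Suc h1 h2 using h3 by (simp add: algebra_simps)
qed

lemma G_zero: "card (G d 0 t) \<le> hb d 0 t"
proof (cases t)
  case 0
  have "G d 0 t \<subseteq> {[]}" unfolding G_def W_def by auto
  then have "card (G d 0 t) \<le> card {[]::(nat set \<times> nat set) list}" by (rule card_mono[rotated]) simp
  then show ?thesis using 0 unfolding hb_def by simp
next
  case (Suc t')
  have "G d 0 t = {}" unfolding G_def W_def using Suc by auto
  then show ?thesis by simp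
qed

lemma G_bound: "card (G d k t) \<le> hb d k t"
proof (induction k arbitrary: t)
  case 0 then show ?case by (rule G_zero)
next
  case (Suc k)
  have "card (G d (Suc k) t) \<le> 2 ^ d * card (G d k t)
     + (if t = 0 then 0 else 2 ^ d * 2 ^ (d - t) * card (G d k (t - 1)))" by (rule G_rec)
  also have "\<dots> \<le> 2 ^ d * hb d k t + (if t = 0 then 0 else 2 ^ d * 2 ^ (d - t) * hb d k (t - 1))"
    using Suc.IH[of t] Suc.IH[of "t - 1"] by (intro add_mono) auto
  also have "\<dots> = hb d (Suc k) t" by (rule hb_rec[symmetric])
  finally show ?case .
qed

lemma W_sub:
  assumes "k \<noteq> 0"
  shows "W d k \<subseteq> (\<Union>t\<in>{1..d}. G d k t)"
proof
  fix ws assume ws: "ws \<in> W d k"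
  obtain t where t: "card (fspan (map snd ws)) = 2 ^ t" using fspan_pow2 by blast
  have sub: "fspan (map snd ws) \<subseteq> Pow {0..<d}" using ws VP_snd_sub fspan_sub unfolding W_def by blast
  then have "card (fspan (map snd ws)) \<le> card (Pow {0..<d})" by (intro card_mono) auto
  then have "(2::nat) ^ t \<le> 2 ^ d" using t by (simp add: card_Pow)
  then have td: "t \<le> d" by simp
  obtain a p where ap: "ws = a # p" using ws assms unfolding W_def by (cases ws) auto
  have "a \<in> VP d" using ws ap unfolding W_def by auto
  then have "ip (snd a) (fst a)" unfolding VP_def by auto
  then have ne: "snd a \<noteq> {}" unfolding ip_def by auto
  have "snd a \<in> fspan (map snd ws)" using ap by (intro fspan_mem) auto
  moreover have "{} \<in> fspan (map snd ws)" by (rule fspan_empty)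
  ultimately have "{{}, snd a} \<subseteq> fspan (map snd ws)" by auto
  then have "card {{}, snd a} \<le> card (fspan (map snd ws))" using fspan_finite by (intro card_mono)
  then have "2 \<le> (2::nat) ^ t" using ne t by simp
  then have "t \<noteq> 0" by (cases t) auto
  then show "ws \<in> (\<Union>t\<in>{1..d}. G d k t)" using ws t td unfolding G_def by auto
qed

lemma W_bound:
  assumes "k \<noteq> 0"
  shows "card (W d k) \<le> (\<Sum>t=1..d. hb d k t)"
proof -
  have "card (W d k) \<le> card (\<Union>t\<in>{1..d}. G d k t)"
    using W_sub[OF assms] by (intro card_mono) (auto simp: G_finite)
  also have "\<dots> \<le> (\<Sum>t=1..d. card (G d k t))" by (rule card_UN_le) simp
  also have "\<dots> \<le> (\<Sum>t=1..d. hb d k t)" by (rule sum_mono) (rule G_bound)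
  finally show ?thesis .
qed

lemma sum_closed: "t \<le> d \<Longrightarrow> (\<Sum>i=1..t. d - i) + (Suc t choose 2) = d * t"
proof (induction t)
  case 0 then show ?case by simp
next
  case (Suc t)
  have c: "(Suc (Suc t) choose 2) = Suc t + (Suc t choose 2)"
    using binomial_Suc_Suc[of "Suc t" 1] by (simp add: numeral_2_eq_2)
  have "(\<Sum>i=1..Suc t. d - i) + (Suc (Suc t) choose 2)
      = ((\<Sum>i=1..t. d - i) + (Suc t choose 2)) + (d - Suc t) + Suc t" using c by simp
  also have "\<dots> = d * t + (d - Suc t) + Suc t" using Suc by simp
  also have "\<dots> = d * Suc t" using Suc.prems by simp
  finally show ?case .
qed

lemma hb_closed:
  assumes "t \<le> d"
  shows "hb d k t = (k choose t) * 2 ^ (d * (t + k) - ((t + 1) choose 2))"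
proof -
  have e: "(\<Sum>i=1..t. d - i) + (Suc t choose 2) = d * t" using sum_closed[OF assms] .
  then have "d * k + (\<Sum>i=1..t. d - i) = d * (t + k) - ((t + 1) choose 2)"
    by (simp add: algebra_simps)
  then show ?thesis unfolding hb_def by simp
qed

lemma W_final:
  assumes "k \<noteq> 0"
  shows "card (W d k) \<le> (\<Sum>t=1..d. (k choose t) * 2 ^ (d * (t + k) - ((t + 1) choose 2)))"
proof -
  have "(\<Sum>t=1..d. hb d k t) = (\<Sum>t=1..d. (k choose t) * 2 ^ (d * (t + k) - ((t + 1) choose 2)))"
  proof (rule sum.cong[OF refl])
    fix t assume "t \<in> {1..d}"
    then have "t \<le> d" by simp
    then show "hb d k t = (k choose t) * 2 ^ (d * (t + k) - ((t + 1) choose 2))" by (rule hb_closed)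
  qed
  moreover have "card (W d k) \<le> (\<Sum>t=1..d. hb d k t)" by (rule W_bound[OF assms])
  ultimately show ?thesis by simp
qed

lemma fi_index:
  "(\<forall>i j. i \<le> j \<longrightarrow> j < length ws \<longrightarrow> ip (snd (ws ! j)) (fst (ws ! i))) \<Longrightarrow> fi ws"
proof (induction ws)
  case Nil then show ?case by simp
next
  case (Cons a p)
  have "fi p"
  proof (rule Cons.IH, intro allI impI)
    fix i j assume "i \<le> j" "j < length p"
    then show "ip (snd (p ! j)) (fst (p ! i))"
      using Cons.prems[rule_format, of "Suc i" "Suc j"] by simp
  qed
  moreover have "\<forall>b\<in>set (a # p). ip (snd b) (fst a)"
  proof
    fix b assume "b \<in> set (a # p)"
    then obtain j where "j < length (a # p)" "b = (a # p) ! j" by (metis in_set_conv_nth)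
    then show "ip (snd b) (fst a)" using Cons.prems[rule_format, of 0 j] by simp
  qed
  ultimately show ?case by simp
qed

lemma no_long:
  assumes sub: "\<forall>i<m. fst (w i) \<subseteq> {0..<d} \<and> snd (w i) \<subseteq> {0..<d}"
    and diag: "\<forall>i<m. ip (snd (w i)) (fst (w i))"
    and tri: "\<forall>i j. i < j \<longrightarrow> j < m \<longrightarrow> \<not> ip (snd (w j)) (fst (w i))"
  shows "m \<le> d"
proof -
  define xs where "xs n = map (\<lambda>i. fst (w i)) (rev [0..<n])" for n
  have c: "card (fspan (xs n)) = 2 ^ n" if "n \<le> m" for n
    using that
  proof (induction n)
    case 0 then show ?case unfolding xs_def by simp
  next
    case (Suc n)
    have xsS: "xs (Suc n) = fst (w n) # xs n" unfolding xs_def by simp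
    have fin: "finite (snd (w n))" using sub Suc.prems by (meson finite_atLeastLessThan finite_subset Suc_le_lessD)
    have "\<forall>\<psi>\<in>set (xs n). \<not> ip \<psi> (snd (w n))"
    proof
      fix \<psi> assume "\<psi> \<in> set (xs n)"
      then obtain i where "i < n" "\<psi> = fst (w i)" unfolding xs_def by auto
      then show "\<not> ip \<psi> (snd (w n))" using tri Suc.prems ip_comm by (metis Suc_le_lessD)
    qed
    moreover have "ip (fst (w n)) (snd (w n))" using diag Suc.prems ip_comm by (metis Suc_le_lessD)
    ultimately have "fst (w n) \<notin> fspan (xs n)" using fspan_perp fin by blast
    then have "card (fspan (xs (Suc n))) = 2 * card (fspan (xs n))" unfolding xsS by (rule fspan_notin)
    then show ?case using Suc by simp
  qed
  have "set (xs m) \<subseteq> Pow {0..<d}" using sub unfolding xs_def by auto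
  then have "fspan (xs m) \<subseteq> Pow {0..<d}" by (rule fspan_sub)
  then have "card (fspan (xs m)) \<le> card (Pow {0..<d})" by (intro card_mono) auto
  then have "(2::nat) ^ m \<le> 2 ^ d" using c[of m] by (simp add: card_Pow)
  then show ?thesis by simp
qed

lemma VP_card:
  assumes "d \<ge> 1"
  shows "(2 ^ d - 1) * 2 ^ (d - 1) \<le> card (VP d)"
proof -
  define A where "A = Sigma (Pow {0..<d} - {{}}) (\<lambda>x. Pow ({0..<d} - {Max x}))"
  define f where "f = (\<lambda>(x, \<psi>). (x, if ip \<psi> x then \<psi> else insert (Max x) \<psi>))"
  have cA: "card A = (2 ^ d - 1) * 2 ^ (d - 1)"
  proof -
    have "card A = (\<Sum>x\<in>Pow {0..<d} - {{}}. card (Pow ({0..<d} - {Max x})))"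
      unfolding A_def by (rule card_SigmaI) auto
    also have "\<dots> = (\<Sum>x\<in>Pow {0..<d} - {{}}. 2 ^ (d - 1))"
    proof (rule sum.cong)
      fix x assume x: "x \<in> Pow {0..<d} - {{}}"
      then have "finite x" "x \<noteq> {}" by (auto intro: finite_subset)
      then have "Max x \<in> {0..<d}" using x Max_in by blast
      then show "card (Pow ({0..<d} - {Max x})) = 2 ^ (d - 1)" by (simp add: card_Pow)
    qed simp
    also have "\<dots> = (2 ^ d - 1) * 2 ^ (d - 1)" by (simp add: card_Pow)
    finally show ?thesis .
  qed
  have inj: "inj_on f A"
  proof (rule inj_onI)
    fix a b assume ab: "a \<in> A" "b \<in> A" "f a = f b"
    obtain x \<psi> where a: "a = (x, \<psi>)" by fastforce
    obtain y \<chi> where b: "b = (y, \<chi>)" by fastforce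
    have xy: "x = y" using ab a b unfolding f_def by (auto split: if_splits)
    have "\<psi> = snd (f a) - {Max x}" using ab(1) a unfolding A_def f_def by auto
    moreover have "\<chi> = snd (f b) - {Max y}" using ab(2) b unfolding A_def f_def by auto
    ultimately show "a = b" using a b xy ab(3) by simp
  qed
  have img: "f ` A \<subseteq> VP d"
  proof
    fix z assume "z \<in> f ` A"
    then obtain x \<psi> where xp: "(x, \<psi>) \<in> A" "z = f (x, \<psi>)" by auto
    have fx: "finite x" "x \<noteq> {}" "x \<subseteq> {0..<d}" using xp(1) unfolding A_def by (auto intro: finite_subset)
    have m: "Max x \<in> x" using fx Max_in by blast
    have mp: "Max x \<notin> \<psi>" "\<psi> \<subseteq> {0..<d}" using xp(1) unfolding A_def by auto
    have "ip (if ip \<psi> x then \<psi> else insert (Max x) \<psi>) x"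
    proof (cases "ip \<psi> x")
      case True then show ?thesis by simp
    next
      case False
      have "insert (Max x) \<psi> \<inter> x = insert (Max x) (\<psi> \<inter> x)" using m by auto
      moreover have "Max x \<notin> \<psi> \<inter> x" using mp by auto
      moreover have "finite (\<psi> \<inter> x)" using fx by auto
      ultimately have "card (insert (Max x) \<psi> \<inter> x) = Suc (card (\<psi> \<inter> x))" by simp
      then show ?thesis using False unfolding ip_def by simp
    qed
    moreover have "insert (Max x) \<psi> \<subseteq> {0..<d}" using mp m fx by auto
    ultimately show "z \<in> VP d" using xp fx mp unfolding f_def VP_def by auto
  qed
  have "card A \<le> card (VP d)" using card_inj_on_le[OF inj img VP_finite] .
  then show ?thesis using cA by simp
qed



lemma construction:
  assumes N: "N \<le> card (VP d)" and k: "k \<noteq> 0"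
  shows "\<exists>E :: (nat \<times> nat) set. loopless_digraph {0..<N} E \<and> Ts_free {0..<N} E (Suc d) \<and>
           fwi {0..<N} E k \<le> (\<Sum>t=1..d. (k choose t) * 2 ^ (d * (t + k) - ((t + 1) choose 2)))"
proof -
  obtain g where bij: "bij_betw g {0..<card (VP d)} (VP d)"
    using ex_bij_betw_nat_finite[OF VP_finite] by blast
  have inj: "inj_on g {0..<N}" using bij N unfolding bij_betw_def by (auto intro: inj_on_subset)
  have gV: "g u \<in> VP d" if "u < N" for u using bij N that unfolding bij_betw_def by auto
  define E where "E = {(u, v). u < N \<and> v < N \<and> u \<noteq> v \<and> \<not> ip (snd (g v)) (fst (g u))}"
  have l: "loopless_digraph {0..<N} E" unfolding loopless_digraph_def E_def by auto
  have gVs: "fst (g u) \<subseteq> {0..<d} \<and> snd (g u) \<subseteq> {0..<d}" "ip (snd (g u)) (fst (g u))" if "u < N" for u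
    using gV[OF that] unfolding VP_def by auto
  have t: "Ts_free {0..<N} E (Suc d)"
    unfolding Ts_free_def contains_Ts_def
  proof
    assume "\<exists>f. inj_on f {0..<Suc d} \<and> f ` {0..<Suc d} \<subseteq> {0..<N} \<and>
          (\<forall>i j. i < j \<and> j < Suc d \<longrightarrow> (f i, f j) \<in> E)"
    then obtain f where f: "f ` {0..<Suc d} \<subseteq> {0..<N}" "\<forall>i j. i < j \<and> j < Suc d \<longrightarrow> (f i, f j) \<in> E"
      by blast
    have fN: "f i < N" if "i < Suc d" for i
    proof -
      have "f i \<in> f ` {0..<Suc d}" using that by simp
      then show ?thesis using f(1) by auto
    qed
    have "Suc d \<le> d"
    proof (rule no_long[where w = "\<lambda>i. g (f i)"])
      show "\<forall>i<Suc d. fst (g (f i)) \<subseteq> {0..<d} \<and> snd (g (f i)) \<subseteq> {0..<d}" using gVs(1) fN by blast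
      show "\<forall>i<Suc d. ip (snd (g (f i))) (fst (g (f i)))" using gVs(2) fN by blast
      show "\<forall>i j. i < j \<longrightarrow> j < Suc d \<longrightarrow> \<not> ip (snd (g (f j))) (fst (g (f i)))"
        using f(2) unfolding E_def by auto
    qed
    then show False by simp
  qed
  define F where "F = {xs. length xs = k \<and> set xs \<subseteq> {0..<N} \<and>
                         (\<forall>i j. i < j \<and> j < k \<longrightarrow> (xs ! i, xs ! j) \<notin> E)}"
  have injm: "inj_on (map g) F"
    by (rule inj_on_mapI, rule inj_on_subset[OF inj]) (auto simp: F_def)
  have img: "map g ` F \<subseteq> W d k"
  proof
    fix ys assume "ys \<in> map g ` F"
    then obtain xs where xs: "xs \<in> F" "ys = map g xs" by auto
    have len: "length xs = k" and sub: "set xs \<subseteq> {0..<N}" using xs(1) unfolding F_def by auto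
    have xsN: "xs ! i < N" if "i < k" for i using sub len that by (metis atLeastLessThan_iff nth_mem subsetD)
    have "fi ys"
    proof (rule fi_index, intro allI impI)
      fix i j assume ij: "i \<le> j" "j < length ys"
      then have jk: "j < k" "i < k" using xs len by auto
      show "ip (snd (ys ! j)) (fst (ys ! i))"
      proof (cases "xs ! i = xs ! j")
        case True then show ?thesis using xs(2) jk gVs(2)[OF xsN[OF jk(1)]] len by simp
      next
        case False
        then have "i < j" using ij le_neq_implies_less by blast
        then have "(xs ! i, xs ! j) \<notin> E" using xs(1) jk unfolding F_def by auto
        then show ?thesis using False xsN[OF jk(1)] xsN[OF jk(2)] xs(2) jk len unfolding E_def by auto
      qed
    qed
    moreover have "set ys \<subseteq> VP d" using xs(2) sub gV by auto
    ultimately show "ys \<in> W d k" unfolding W_def using xs(2) len by auto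
  qed
  have "fwi {0..<N} E k = card F" unfolding fwi_def F_def ..
  also have "\<dots> \<le> card (W d k)" using card_inj_on_le[OF injm img W_finite] .
  also have "\<dots> \<le> (\<Sum>t=1..d. (k choose t) * 2 ^ (d * (t + k) - ((t + 1) choose 2)))" by (rule W_final[OF k])
  finally show ?thesis using l t by blast
qed

lemma N_le:
  assumes "4 \<le> s"
  shows "2^(2*s-3) - 2^(s-1) - 2^(s-2) + 1 \<le> card (VP (s - 1))"
proof -
  define q where "q = (2::nat) ^ (s - 2)"
  have "(2::nat) ^ 2 \<le> 2 ^ (s - 2)" by (rule power_increasing) (use assms in auto)
  then have q4: "q \<ge> 4" unfolding q_def by simp
  have "s - 1 = Suc (s - 2)" using assms by simp
  then have e1: "(2::nat) ^ (s - 1) = 2 * q" unfolding q_def by simp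
  have "2 * s - 3 = Suc ((s - 2) + (s - 2))" using assms by simp
  then have "(2::nat) ^ (2 * s - 3) = 2 ^ (Suc ((s - 2) + (s - 2)))" by (rule arg_cong)
  then have e2: "(2::nat) ^ (2 * s - 3) = 2 * (q * q)" unfolding q_def by (simp only: power_Suc power_add)
  have "(2 ^ (s - 1) - 1) * 2 ^ (s - 1 - 1) \<le> card (VP (s - 1))" using assms by (intro VP_card) simp
  moreover have "s - 1 - 1 = s - 2" by simp
  ultimately have c: "(2 * q - 1) * q \<le> card (VP (s - 1))" using e1 q_def by simp
  have "3 * q \<le> (2 * q) * q" using q4 by (intro mult_le_mono1) simp
  then have h3: "3 * q \<le> 2 * (q * q)" by (simp add: mult.assoc)
  have h4: "(2 * q - 1) * q = 2 * (q * q) - q" by (simp add: algebra_simps diff_mult_distrib)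
  define Q where "Q = q * q"
  have "2 * Q - 2 * q - q + 1 \<le> 2 * Q - q" using h3 q4 unfolding Q_def[symmetric] by linarith
  then have h5: "2 * (q * q) - 2 * q - q + 1 \<le> (2 * q - 1) * q" unfolding h4 Q_def .
  have "(2::nat) ^ (2 * s - 3) - 2 ^ (s - 1) - 2 ^ (s - 2) + 1 = 2 * (q * q) - 2 * q - q + 1"
    unfolding e1 e2 q_def ..
  also have "\<dots> \<le> (2 * q - 1) * q" by (rule h5)
  also have "\<dots> \<le> card (VP (s - 1))" by (rule c)
  finally show ?thesis .
qed



definition Bs :: "nat \<Rightarrow> nat \<Rightarrow> nat" where
  "Bs s k = (\<Sum>t=1..s-1. (k choose t) * 2 ^ ((s-1)*(t+k) - ((t+1) choose 2)))"

lemma int_xx: "(x::int) * (x - 1) \<ge> 0"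
proof (cases "x \<ge> 1")
  case True then show ?thesis by simp
next
  case False then have "x \<le> 0" by simp
  then show ?thesis by (simp add: mult_nonpos_nonpos)
qed

lemma quad_ineq:
  fixes m t L :: nat
  assumes "t \<le> m"
  shows "real m * real t - real t * (real t + 1) / 2 - real L * real t
         \<le> real m * (real m - 1) / 2 + real L * (real L + 1) / 2 - real L * real m"
proof -
  define x where "x = int m - int t - int L"
  have h: "real_of_int (x * (x - 1)) \<ge> 0" using int_xx[of x] by linarith
  have e: "real_of_int (x * (x - 1)) =
     (real m * (real m - 1) + real L * (real L + 1) - 2 * real L * real m)
      - (2 * real m * real t - real t * (real t + 1) - 2 * real L * real t)"
    unfolding x_def by (simp add: algebra_simps)
  show ?thesis using h e by (simp add: field_simps)
qed

lemma binom_pow_le: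
  fixes k t L :: nat
  shows "real (k choose t) * 2 ^ (L * t) \<le> (2 ^ L + 1) ^ k"
proof (cases "t \<le> k")
  case True
  have "(2 ^ L + 1 :: real) ^ k = (\<Sum>i\<le>k. real (k choose i) * (2 ^ L) ^ i * 1 ^ (k - i))"
    by (rule binomial_ring)
  also have "\<dots> \<ge> real (k choose t) * (2 ^ L) ^ t * 1 ^ (k - t)"
    by (rule member_le_sum[of t "{..k}" "\<lambda>i. real (k choose i) * (2 ^ L) ^ i * 1 ^ (k - i)"]) (use True in auto)
  finally show ?thesis by (simp add: power_mult mult.commute)
next
  case False then show ?thesis by (simp add: binomial_eq_0)
qed

lemma two_choose: "2 * (Suc t choose 2) = Suc t * t"
proof (induction t)
  case 0 then show ?case by simp
next
  case (Suc t)
  have c: "(Suc (Suc t) choose 2) = Suc t + (Suc t choose 2)"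
    using binomial_Suc_Suc[of "Suc t" 1] by (simp add: numeral_2_eq_2)
  show ?case unfolding c using Suc by simp
qed

lemma term_bound:
  fixes s k t L :: nat
  assumes "1 \<le> t" "t \<le> s - 1"
  shows "real ((k choose t) * 2 ^ ((s-1)*(t+k) - ((t+1) choose 2)))
    \<le> (2 ^ L + 1) ^ k * 2 powr (real (s-1) * real k + real (s-1) * (real (s-1) - 1) / 2
                                 + real L * (real L + 1) / 2 - real L * real (s-1))"
proof -
  define m where "m = s - 1"
  have tm: "t \<le> m" using assms unfolding m_def by simp
  have tc: "2 * ((t+1) choose 2) = (t+1) * t" using two_choose[of t] by simp
  then have c2: "real ((t+1) choose 2) = real t * (real t + 1) / 2"
    by (metis (mono_tags, lifting) of_nat_mult of_nat_Suc of_nat_numeral add.commute Suc_eq_plus1 mult.commute nonzero_mult_div_cancel_left zero_neq_numeral)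
  have "(t+1) * t \<le> (2 * m) * t" using tm assms(1) by (intro mult_le_mono1) simp
  then have cle: "(t+1) choose 2 \<le> m * (t + k)" using tc by (simp add: algebra_simps)
  define Ex where "Ex = real m * real (t + k) - real t * (real t + 1) / 2"
  have eE: "real (m*(t+k) - ((t+1) choose 2)) = Ex" unfolding Ex_def using cle c2 by (simp add: of_nat_diff)
  have p1: "real (2 ^ (m*(t+k) - ((t+1) choose 2)) :: nat) = 2 powr Ex"
    using eE by (metis of_nat_numeral of_nat_power powr_realpow zero_less_numeral)
  have p2: "(2::real) ^ (L * t) = 2 powr (real L * real t)"
    by (metis of_nat_mult of_nat_numeral powr_realpow zero_less_numeral)
  have b: "real (k choose t) * 2 powr (real L * real t) \<le> (2 ^ L + 1) ^ k"
    using binom_pow_le[of k t L] p2 by simp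
  have "real ((k choose t) * 2 ^ (m*(t+k) - ((t+1) choose 2))) = real (k choose t) * 2 powr Ex"
    using p1 by simp
  also have "\<dots> = (real (k choose t) * 2 powr (real L * real t)) * 2 powr (Ex - real L * real t)"
    by (simp add: powr_diff)
  also have "\<dots> \<le> (2 ^ L + 1) ^ k * 2 powr (Ex - real L * real t)"
    by (rule mult_right_mono[OF b]) simp
  also have "\<dots> \<le> (2 ^ L + 1) ^ k * 2 powr (real m * real k + real m * (real m - 1) / 2
                                 + real L * (real L + 1) / 2 - real L * real m)"
  proof (rule mult_left_mono)
    have "Ex - real L * real t = real m * real k + (real m * real t - real t * (real t + 1) / 2 - real L * real t)"
      unfolding Ex_def by (simp add: algebra_simps)
    then have "Ex - real L * real t \<le> real m * real k + real m * (real m - 1) / 2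
                                 + real L * (real L + 1) / 2 - real L * real m"
      using quad_ineq[OF tm, of L] by linarith
    then show "2 powr (Ex - real L * real t) \<le> 2 powr (real m * real k + real m * (real m - 1) / 2
                                 + real L * (real L + 1) / 2 - real L * real m)"
      by (rule powr_mono) simp
  qed simp
  finally show ?thesis unfolding m_def .
qed

lemma Bs_pos:
  assumes "4 \<le> s" "s \<le> k"
  shows "Bs s k > 0"
proof -
  have "(k choose 1) * 2 ^ ((s-1)*(1+k) - ((1+1) choose 2)) \<le> Bs s k"
    unfolding Bs_def
    by (rule member_le_sum[of 1 "{1..s-1}" "\<lambda>t. (k choose t) * 2 ^ ((s-1)*(t+k) - ((t+1) choose 2))"])
       (use assms in auto)
  moreover have "(k choose 1) * 2 ^ ((s-1)*(1+k) - ((1+1) choose 2)) > (0::nat)" using assms by simp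
  ultimately show ?thesis by linarith
qed

lemma Bs_real_bound:
  assumes "4 \<le> s"
  shows "real (Bs s k) \<le> real (s - 1) * ((2 ^ L + 1) ^ k * 2 powr (real (s-1) * real k + real (s-1) * (real (s-1) - 1) / 2
                                 + real L * (real L + 1) / 2 - real L * real (s-1)))"
proof -
  define C where "C = (2 ^ L + 1) ^ k * 2 powr (real (s-1) * real k + real (s-1) * (real (s-1) - 1) / 2
                                 + real L * (real L + 1) / 2 - real L * real (s-1))"
  have "real (Bs s k) = (\<Sum>t=1..s-1. real ((k choose t) * 2 ^ ((s-1)*(t+k) - ((t+1) choose 2))))"
    unfolding Bs_def by (simp only: of_nat_sum)
  also have "\<dots> \<le> (\<Sum>t=1..s-1. C)"
    by (rule sum_mono) (unfold C_def, rule term_bound, auto)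
  also have "\<dots> = real (s - 1) * C" by simp
  finally show ?thesis unfolding C_def .
qed

lemma ln2_half: "ln (2::real) \<ge> 1 / 2"
proof -
  have "ln (1 / 2 :: real) \<le> 1 / 2 - 1" by (rule ln_le_minus_one) simp
  then show ?thesis by (simp add: ln_div)
qed

lemma log2_pow_plus1:
  fixes L :: nat
  shows "log 2 (2 ^ L + 1) \<le> real L + 2 / 2 ^ L"
proof -
  define y :: real where "y = 1 / 2 ^ L"
  have y0: "y > 0" unfolding y_def by simp
  have "(2::real) ^ L + 1 = 2 ^ L * (1 + y)" unfolding y_def by (simp add: field_simps)
  then have "log 2 (2 ^ L + 1) = log 2 (2 ^ L) + log 2 (1 + y)"
    using y0 by (simp add: log_mult)
  also have "log 2 ((2::real) ^ L) = real L" by (simp add: log_nat_power)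
  also have "log 2 (1 + y) = ln (1 + y) / ln 2" by (simp add: log_def)
  also have "\<dots> \<le> y / ln 2"
    using ln_add_one_self_le_self[of y] y0 by (intro divide_right_mono) auto
  also have "\<dots> \<le> y / (1 / 2)"
    using ln2_half y0 by (intro divide_left_mono) auto
  also have "\<dots> = 2 / 2 ^ L" unfolding y_def by simp
  finally show ?thesis by simp
qed

lemma log_bound:
  fixes s a L :: nat
  assumes "4 \<le> s" "1 \<le> L"
  shows "log 2 (real (Bs s (s + a))) - (3/2 * real s ^ 2 + real a * real s - 5/2 * real s)
     \<le> log 2 (real s) + real L * real a + 4 * (real s + real a) / 2 ^ L + real L * real L + 2 * real L + 1"
proof -
  define k where "k = s + a"
  define X where "X = real (s-1) * real k + real (s-1) * (real (s-1) - 1) / 2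
                                 + real L * (real L + 1) / 2 - real L * real (s-1)"
  define Q :: real where "Q = (2 ^ L + 1) ^ k"
  have "(0::real) < 2 ^ L" by simp
  then have "(0::real) < 2 ^ L + 1" by linarith
  then have Q0: "Q > 0" unfolding Q_def by (rule zero_less_power)
  have s1: "real (s - 1) > 0" using assms by simp
  have B0: "real (Bs s k) > 0" using Bs_pos[of s k] assms unfolding k_def by simp
  have hB: "real (Bs s k) \<le> real (s - 1) * (Q * 2 powr X)"
    using Bs_real_bound[OF assms(1), of k L] unfolding Q_def X_def .
  have "log 2 (real (Bs s k)) \<le> log 2 (real (s - 1) * (Q * 2 powr X))"
    by (rule log_mono[OF _ B0 hB]) simp
  also have "\<dots> = log 2 (real (s - 1)) + log 2 Q + X"
    using s1 Q0 by (simp add: log_mult)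
  also have "log 2 Q = real k * log 2 (2 ^ L + 1)" unfolding Q_def by (simp add: log_nat_power)
  also have "log 2 (real (s - 1)) \<le> log 2 (real s)" using s1 by (intro log_mono) auto
  finally have l1: "log 2 (real (Bs s k)) \<le> log 2 (real s) + real k * log 2 (2 ^ L + 1) + X" by simp
  have "real k * log 2 (2 ^ L + 1) \<le> real k * (real L + 2 / 2 ^ L)"
    by (rule mult_left_mono[OF log2_pow_plus1]) simp
  with l1 have l2: "log 2 (real (Bs s k)) \<le> log 2 (real s) + real k * (real L + 2 / 2 ^ L) + X" by simp
  have rs: "real (s - 1) = real s - 1" using assms by (simp add: of_nat_diff)
  have ident: "real k * real L + X - (3/2 * real s ^ 2 + real a * real s - 5/2 * real s)
      = real L * real a + real L + real L * (real L + 1) / 2 - real a + 1"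
    unfolding X_def rs k_def by (simp add: field_simps power2_eq_square)
  have "real k * (2 / 2 ^ L) \<le> 4 * (real s + real a) / 2 ^ L"
    unfolding k_def by (simp add: field_simps)
  moreover have "real L * (real L + 1) / 2 \<le> real L * real L + real L"
    by (simp add: field_simps)
  moreover have "real k * (real L + 2 / 2 ^ L) = real k * real L + real k * (2 / 2 ^ L)"
    by (simp add: algebra_simps)
  moreover have "real a \<ge> 0" by simp
  ultimately show ?thesis using l2 ident unfolding k_def[symmetric] by linarith
qed



lemma part1:
  "\<forall>s k :: nat. 4 \<le> s \<and> s \<le> k \<longrightarrow>
           (\<exists>E :: (nat \<times> nat) set.
              loopless_digraph {0..<2^(2*s-3) - 2^(s-1) - 2^(s-2) + 1} E \<and>
              Ts_free {0..<2^(2*s-3) - 2^(s-1) - 2^(s-2) + 1} E s \<and>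
              fwi {0..<2^(2*s-3) - 2^(s-1) - 2^(s-2) + 1} E k
                \<le> (\<Sum>t=1..s-1. (k choose t) * 2 ^ ((s-1)*(t+k) - ((t+1) choose 2))))"
proof (intro allI impI)
  fix s k :: nat assume h: "4 \<le> s \<and> s \<le> k"
  have N: "2^(2*s-3) - 2^(s-1) - 2^(s-2) + 1 \<le> card (VP (s-1))" by (rule N_le) (use h in auto)
  have k: "k \<noteq> 0" using h by auto
  have ss: "Suc (s - 1) = s" using h by auto
  show "\<exists>E :: (nat \<times> nat) set.
              loopless_digraph {0..<2^(2*s-3) - 2^(s-1) - 2^(s-2) + 1} E \<and>
              Ts_free {0..<2^(2*s-3) - 2^(s-1) - 2^(s-2) + 1} E s \<and>
              fwi {0..<2^(2*s-3) - 2^(s-1) - 2^(s-2) + 1} E k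
                \<le> (\<Sum>t=1..s-1. (k choose t) * 2 ^ ((s-1)*(t+k) - ((t+1) choose 2)))"
    using construction[OF N k] unfolding ss .
qed

lemma part2:
  "\<forall>a :: nat \<Rightarrow> nat. (\<lambda>s. real (a s)) \<in> o(\<lambda>s. real s) \<longrightarrow>
        (\<exists>e :: nat \<Rightarrow> real. e \<in> o(\<lambda>s. real s) \<and>
           (\<forall>s \<ge> 4. \<exists>E :: (nat \<times> nat) set.
              loopless_digraph {0..<2^(2*s-3) - 2^(s-1) - 2^(s-2) + 1} E \<and>
              Ts_free {0..<2^(2*s-3) - 2^(s-1) - 2^(s-2) + 1} E s \<and>
              fwi {0..<2^(2*s-3) - 2^(s-1) - 2^(s-2) + 1} E (s + a s)
                \<le> (\<Sum>t=1..s-1. ((s + a s) choose t) * 2 ^ ((s-1)*(t+(s + a s)) - ((t+1) choose 2))) \<and>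
              real (fwi {0..<2^(2*s-3) - 2^(s-1) - 2^(s-2) + 1} E (s + a s))
                \<le> 2 powr (3/2 * real s ^ 2 + real (a s) * real s - 5/2 * real s + e s)))"
proof (intro allI impI)
  fix a :: "nat \<Rightarrow> nat"
  assume ao: "(\<lambda>s. real (a s)) \<in> o(\<lambda>s. real s)"
  define main where "main s = 3/2 * real s ^ 2 + real (a s) * real s - 5/2 * real s" for s
  define e where "e s = max 0 (log 2 (real (Bs s (s + a s))) - main s)" for s
  have good: "\<forall>s \<ge> 4. \<exists>E :: (nat \<times> nat) set.
              loopless_digraph {0..<2^(2*s-3) - 2^(s-1) - 2^(s-2) + 1} E \<and>
              Ts_free {0..<2^(2*s-3) - 2^(s-1) - 2^(s-2) + 1} E s \<and>
              fwi {0..<2^(2*s-3) - 2^(s-1) - 2^(s-2) + 1} E (s + a s)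
                \<le> (\<Sum>t=1..s-1. ((s + a s) choose t) * 2 ^ ((s-1)*(t+(s + a s)) - ((t+1) choose 2))) \<and>
              real (fwi {0..<2^(2*s-3) - 2^(s-1) - 2^(s-2) + 1} E (s + a s))
                \<le> 2 powr (3/2 * real s ^ 2 + real (a s) * real s - 5/2 * real s + e s)"
  proof (intro allI impI)
    fix s :: nat assume s4: "4 \<le> s"
    obtain E :: "(nat \<times> nat) set" where E:
      "loopless_digraph {0..<2^(2*s-3) - 2^(s-1) - 2^(s-2) + 1} E"
      "Ts_free {0..<2^(2*s-3) - 2^(s-1) - 2^(s-2) + 1} E s"
      "fwi {0..<2^(2*s-3) - 2^(s-1) - 2^(s-2) + 1} E (s + a s)
                \<le> (\<Sum>t=1..s-1. ((s + a s) choose t) * 2 ^ ((s-1)*(t+(s + a s)) - ((t+1) choose 2)))"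
      using part1 s4 by (meson le_add1)
    define B where "B = Bs s (s + a s)"
    have fB: "fwi {0..<2^(2*s-3) - 2^(s-1) - 2^(s-2) + 1} E (s + a s) \<le> B"
      using E(3) unfolding B_def Bs_def .
    have B0: "real B > 0" using Bs_pos[of s "s + a s"] s4 unfolding B_def by simp
    have "real (fwi {0..<2^(2*s-3) - 2^(s-1) - 2^(s-2) + 1} E (s + a s)) \<le> real B"
      using fB by simp
    also have "\<dots> = 2 powr (log 2 (real B))" using B0 by simp
    also have "\<dots> \<le> 2 powr (main s + e s)"
      by (rule powr_mono) (auto simp: e_def B_def)
    finally show "\<exists>E :: (nat \<times> nat) set.
              loopless_digraph {0..<2^(2*s-3) - 2^(s-1) - 2^(s-2) + 1} E \<and>
              Ts_free {0..<2^(2*s-3) - 2^(s-1) - 2^(s-2) + 1} E s \<and>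
              fwi {0..<2^(2*s-3) - 2^(s-1) - 2^(s-2) + 1} E (s + a s)
                \<le> (\<Sum>t=1..s-1. ((s + a s) choose t) * 2 ^ ((s-1)*(t+(s + a s)) - ((t+1) choose 2))) \<and>
              real (fwi {0..<2^(2*s-3) - 2^(s-1) - 2^(s-2) + 1} E (s + a s))
                \<le> 2 powr (3/2 * real s ^ 2 + real (a s) * real s - 5/2 * real s + e s)"
      using E unfolding main_def by blast
  qed
  have eo: "e \<in> o(\<lambda>s. real s)"
  proof (rule landau_o.smallI)
    fix c :: real assume c: "c > 0"
    obtain L0 :: nat where L0: "32 / c < 2 ^ L0" using real_arch_pow[of 2 "32 / c"] by auto
    define L where "L = Suc L0"
    have L1: "1 \<le> L" unfolding L_def by simp
    have "(2::real) ^ L0 \<le> 2 ^ L" unfolding L_def by (rule power_increasing) auto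
    then have L2: "32 / c < 2 ^ L" using L0 by linarith
    then have L3: "8 / 2 ^ L < c / 4" using c by (simp add: field_simps)
    define c' where "c' = min 1 (c / (4 * real L))"
    have c'0: "c' > 0" unfolding c'_def using c L1 by simp
    define K where "K = real L * real L + 2 * real L + 1"
    have ev1: "eventually (\<lambda>s. norm (real (a s)) \<le> c' * norm (real s)) at_top"
      by (rule landau_o.smallD[OF ao c'0])
    have lo: "(\<lambda>s::nat. log 2 (real s) + K) \<in> o(\<lambda>s. real s)" by real_asymp
    have ev2: "eventually (\<lambda>s. norm (log 2 (real s) + K) \<le> c / 2 * norm (real s)) at_top"
      by (rule landau_o.smallD[OF lo]) (use c in simp)
    have ev3: "eventually (\<lambda>s::nat. 4 \<le> s) at_top" by (rule eventually_ge_at_top)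
    show "eventually (\<lambda>s. norm (e s) \<le> c * norm (real s)) at_top"
      using ev1 ev2 ev3
    proof eventually_elim
      case (elim s)
      have as: "real (a s) \<le> c' * real s" using elim(1) by simp
      have "c' \<le> 1" unfolding c'_def by simp
      then have "c' * real s \<le> 1 * real s" by (intro mult_right_mono) auto
      then have as1: "real (a s) \<le> real s" using as by linarith
      have "c' \<le> c / (4 * real L)" unfolding c'_def by simp
      then have "c' * real s \<le> c / (4 * real L) * real s" by (intro mult_right_mono) auto
      then have as2: "real (a s) \<le> c / (4 * real L) * real s" using as by linarith
      have "norm (log 2 (real s) + K) \<le> c / 2 * real s" using elim(2) by simp
      moreover have "log 2 (real s) + K \<le> norm (log 2 (real s) + K)" by simp
      ultimately have lg: "log 2 (real s) + K \<le> c / 2 * real s" by linarith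
      have lb: "log 2 (real (Bs s (s + a s))) - main s
          \<le> log 2 (real s) + real L * real (a s) + 4 * (real s + real (a s)) / 2 ^ L
             + real L * real L + 2 * real L + 1"
        using log_bound[OF elim(3) L1, of "a s"] unfolding main_def .
      have t1: "real L * real (a s) \<le> c / 4 * real s"
      proof -
        have "real L * real (a s) \<le> real L * (c / (4 * real L) * real s)"
          using as2 by (rule mult_left_mono) simp
        also have "\<dots> = c / 4 * real s" using L1 by (simp add: field_simps)
        finally show ?thesis .
      qed
      have t2: "4 * (real s + real (a s)) / 2 ^ L \<le> c / 4 * real s"
      proof -
        have "4 * (real s + real (a s)) / 2 ^ L \<le> 4 * (2 * real s) / 2 ^ L"
          using as1 by (intro divide_right_mono) auto
        also have "\<dots> = 8 / 2 ^ L * real s" by simp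
        also have "\<dots> \<le> c / 4 * real s" using L3 by (intro mult_right_mono) auto
        finally show ?thesis .
      qed
      have "log 2 (real (Bs s (s + a s))) - main s \<le> c * real s"
        using lb t1 t2 lg unfolding K_def by linarith
      moreover have "0 \<le> c * real s" using c by simp
      ultimately have "e s \<le> c * real s" unfolding e_def by simp
      moreover have "e s \<ge> 0" unfolding e_def by simp
      ultimately show ?case by simp
    qed
  qed
  show "\<exists>e :: nat \<Rightarrow> real. e \<in> o(\<lambda>s. real s) \<and>
           (\<forall>s \<ge> 4. \<exists>E :: (nat \<times> nat) set.
              loopless_digraph {0..<2^(2*s-3) - 2^(s-1) - 2^(s-2) + 1} E \<and>
              Ts_free {0..<2^(2*s-3) - 2^(s-1) - 2^(s-2) + 1} E s \<and>
              fwi {0..<2^(2*s-3) - 2^(s-1) - 2^(s-2) + 1} E (s + a s)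
                \<le> (\<Sum>t=1..s-1. ((s + a s) choose t) * 2 ^ ((s-1)*(t+(s + a s)) - ((t+1) choose 2))) \<and>
              real (fwi {0..<2^(2*s-3) - 2^(s-1) - 2^(s-2) + 1} E (s + a s))
                \<le> 2 powr (3/2 * real s ^ 2 + real (a s) * real s - 5/2 * real s + e s))"
    using eo good by blast
qed


theorem lemma3p1:
  shows "(\<forall>s k :: nat. 4 \<le> s \<and> s \<le> k \<longrightarrow>
           (\<exists>E :: (nat \<times> nat) set.
              loopless_digraph {0..<2^(2*s-3) - 2^(s-1) - 2^(s-2) + 1} E \<and>
              Ts_free {0..<2^(2*s-3) - 2^(s-1) - 2^(s-2) + 1} E s \<and>
              fwi {0..<2^(2*s-3) - 2^(s-1) - 2^(s-2) + 1} E k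
                \<le> (\<Sum>t=1..s-1. (k choose t) * 2 ^ ((s-1)*(t+k) - ((t+1) choose 2)))))
     \<and>
     (\<forall>a :: nat \<Rightarrow> nat. (\<lambda>s. real (a s)) \<in> o(\<lambda>s. real s) \<longrightarrow>
        (\<exists>e :: nat \<Rightarrow> real. e \<in> o(\<lambda>s. real s) \<and>
           (\<forall>s \<ge> 4. \<exists>E :: (nat \<times> nat) set.
              loopless_digraph {0..<2^(2*s-3) - 2^(s-1) - 2^(s-2) + 1} E \<and>
              Ts_free {0..<2^(2*s-3) - 2^(s-1) - 2^(s-2) + 1} E s \<and>
              fwi {0..<2^(2*s-3) - 2^(s-1) - 2^(s-2) + 1} E (s + a s)
                \<le> (\<Sum>t=1..s-1. ((s + a s) choose t) * 2 ^ ((s-1)*(t+(s + a s)) - ((t+1) choose 2))) \<and>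
              real (fwi {0..<2^(2*s-3) - 2^(s-1) - 2^(s-2) + 1} E (s + a s))
                \<le> 2 powr (3/2 * real s ^ 2 + real (a s) * real s - 5/2 * real s + e s))))"
  using part1 part2 by (rule conjI)

end
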